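(* Let $(X,\mathcal{E})$ be an extremely normal ballean and let $\mathcal{E}'$ be a coarse structure on $X$ with $\mathcal{E}\subseteq\mathcal{E}'$ such that $(X,\mathcal{E}')$ is maximal. Then the bounded subsets of $(X,\mathcal{E})$ and of $(X,\mathcal{E}')$ coincide, and $\mathcal{E}'=\Uparrow\mathcal{B}_{(X,\mathcal{E})}$.
   Context: A ballean $(X,\mathcal{E})$ is a set with a coarse structure. $E[x]=\{y:(x,y)\in E\}$, $E[A]=\bigcup_{a\in A}E[a]$. $Y$ is bounded if $Y\subseteq E[x]$ for some $x$ and $E\in\mathcal{E}$; $\mathcal{B}_{(X,\mathcal{E})}$ denotes the family of bounded sets. $A$ is large if $X=E[A]$ for some $E\in\mathcal{E}$. An unbounded ballean is extremely normal if every unbounded subset is large, and maximal if $X$ is bounded in every coarse structure strictly containing $\mathcal{E}$. For a bornology $\mathcal{B}$ on $X$ (a family of subsets closed under finite unions and subsets with $\bigcup\mathcal{B}=X$), a coarse structure is compatible with $\mathcal{B}$ if its family of bounded sets equals $\mathcal{B}$; $\Uparrow\mathcal{B}$ denotes the largest coarse structure on $X$ compatible with $\mathcal{B}$ (generated by all $E\subseteq X\times X$ with $E=E^{-1}$, $\Delta_X\subseteq E$, and $E[B]\in\mathcal{B}$ for each $B\in\mathcal{B}$). *)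

theory Defs
  imports Main
begin

definition coarse_structure :: "'a set \<Rightarrow> ('a \<times> 'a) set set \<Rightarrow> bool" where
  "coarse_structure X \<E> \<longleftrightarrow>
     Id_on X \<in> \<E> \<and>
     (\<forall>E\<in>\<E>. Id_on X \<subseteq> E \<and> E \<subseteq> X \<times> X) \<and>
     (\<forall>E\<in>\<E>. \<forall>E'. Id_on X \<subseteq> E' \<and> E' \<subseteq> E \<longrightarrow> E' \<in> \<E>) \<and>
     (\<forall>E\<in>\<E>. E\<inverse> \<in> \<E>) \<and>
     (\<forall>E\<in>\<E>. \<forall>F\<in>\<E>. E \<union> F \<in> \<E>) \<and>
     (\<forall>E\<in>\<E>. \<forall>F\<in>\<E>. E O F \<in> \<E>)"

definition ballean :: "'a set \<Rightarrow> ('a \<times> 'a) set set \<Rightarrow> bool" where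
  "ballean X \<E> \<longleftrightarrow> coarse_structure X \<E> \<and> \<Union>\<E> = X \<times> X"

text \<open>E[x] = E `` {x}, E[A] = E `` A.\<close>
definition bounded_in :: "'a set \<Rightarrow> ('a \<times> 'a) set set \<Rightarrow> 'a set \<Rightarrow> bool" where
  "bounded_in X \<E> Y \<longleftrightarrow> Y \<subseteq> X \<and> (\<exists>x\<in>X. \<exists>E\<in>\<E>. Y \<subseteq> E `` {x})"

definition bounded_sets :: "'a set \<Rightarrow> ('a \<times> 'a) set set \<Rightarrow> 'a set set" where
  "bounded_sets X \<E> = {Y. bounded_in X \<E> Y}"

definition large_in :: "'a set \<Rightarrow> ('a \<times> 'a) set set \<Rightarrow> 'a set \<Rightarrow> bool" where
  "large_in X \<E> A \<longleftrightarrow> A \<subseteq> X \<and> (\<exists>E\<in>\<E>. X = E `` A)"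

definition unbounded_ballean :: "'a set \<Rightarrow> ('a \<times> 'a) set set \<Rightarrow> bool" where
  "unbounded_ballean X \<E> \<longleftrightarrow> ballean X \<E> \<and> \<not> bounded_in X \<E> X"

definition extremely_normal :: "'a set \<Rightarrow> ('a \<times> 'a) set set \<Rightarrow> bool" where
  "extremely_normal X \<E> \<longleftrightarrow> unbounded_ballean X \<E> \<and>
     (\<forall>Y. Y \<subseteq> X \<and> \<not> bounded_in X \<E> Y \<longrightarrow> large_in X \<E> Y)"

definition maximal_ballean :: "'a set \<Rightarrow> ('a \<times> 'a) set set \<Rightarrow> bool" where
  "maximal_ballean X \<E> \<longleftrightarrow> unbounded_ballean X \<E> \<and>
     (\<forall>\<E>'. coarse_structure X \<E>' \<and> \<E> \<subset> \<E>' \<longrightarrow> bounded_in X \<E>' X)"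

definition generated_coarse :: "'a set \<Rightarrow> ('a \<times> 'a) set set \<Rightarrow> ('a \<times> 'a) set set" where
  "generated_coarse X G = \<Inter> {\<E>. coarse_structure X \<E> \<and> G \<subseteq> \<E>}"

definition Uparrow :: "'a set \<Rightarrow> 'a set set \<Rightarrow> ('a \<times> 'a) set set" where
  "Uparrow X \<B> = generated_coarse X
     {E. E \<subseteq> X \<times> X \<and> E = E\<inverse> \<and> Id_on X \<subseteq> E \<and> (\<forall>B\<in>\<B>. E `` B \<in> \<B>)}"

end

theory Submission
  imports Defs
begin

lemma cs_Inter:
  assumes "\<forall>C\<in>S. coarse_structure X C" "S \<noteq> {}"
  shows "coarse_structure X (\<Inter>S)"
proof -
  have A: "\<And>C. C \<in> S \<Longrightarrow> coarse_structure X C" using assms by blast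
  have 1: "Id_on X \<in> \<Inter>S" using A unfolding coarse_structure_def by blast
  have 2: "\<forall>E\<in>\<Inter>S. Id_on X \<subseteq> E \<and> E \<subseteq> X \<times> X"
  proof
    fix E assume "E \<in> \<Inter>S"
    then obtain C where "C \<in> S" "E \<in> C" using assms(2) by blast
    then show "Id_on X \<subseteq> E \<and> E \<subseteq> X \<times> X" using A unfolding coarse_structure_def by blast
  qed
  have 3: "\<forall>E\<in>\<Inter>S. \<forall>E'. Id_on X \<subseteq> E' \<and> E' \<subseteq> E \<longrightarrow> E' \<in> \<Inter>S"
    using A unfolding coarse_structure_def by blast
  have 4: "\<forall>E\<in>\<Inter>S. E\<inverse> \<in> \<Inter>S" using A unfolding coarse_structure_def by blast
  have 5: "\<forall>E\<in>\<Inter>S. \<forall>F\<in>\<Inter>S. E \<union> F \<in> \<Inter>S" using A unfolding coarse_structure_def by blast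
  have 6: "\<forall>E\<in>\<Inter>S. \<forall>F\<in>\<Inter>S. E O F \<in> \<Inter>S" using A unfolding coarse_structure_def by blast
  show ?thesis unfolding coarse_structure_def using 1 2 3 4 5 6 by blast
qed

lemma full_cs: "coarse_structure X {E. Id_on X \<subseteq> E \<and> E \<subseteq> X \<times> X}"
proof -
  have "Id_on X \<subseteq> E O F" if "Id_on X \<subseteq> E" "Id_on X \<subseteq> F" for E F :: "('a\<times>'a) set"
  proof
    fix p assume "p \<in> Id_on X"
    then obtain x where "p = (x,x)" "x \<in> X" by blast
    then show "p \<in> E O F" using that by blast
  qed
  then show ?thesis unfolding coarse_structure_def by auto
qed

lemma gen_cs:
  assumes "G \<subseteq> {E. Id_on X \<subseteq> E \<and> E \<subseteq> X \<times> X}"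
  shows "coarse_structure X (generated_coarse X G)"
  unfolding generated_coarse_def
  apply (rule cs_Inter) using full_cs assms by blast+

lemma gen_sub: "G \<subseteq> generated_coarse X G"
  unfolding generated_coarse_def by auto

lemma gen_least: "coarse_structure X C \<Longrightarrow> G \<subseteq> C \<Longrightarrow> generated_coarse X G \<subseteq> C"
  unfolding generated_coarse_def by auto

theorem proposition1:
  fixes X :: "'a set" and \<E> \<E>' :: "('a \<times> 'a) set set"
  assumes "extremely_normal X \<E>"
    and "coarse_structure X \<E>'"
    and "\<E> \<subseteq> \<E>'"
    and "maximal_ballean X \<E>'"
  shows "bounded_sets X \<E> = bounded_sets X \<E>' \<and> \<E>' = Uparrow X (bounded_sets X \<E>)"
proof -
  note cs = assms(2)[unfolded coarse_structure_def]
  have unbE': "\<not> bounded_in X \<E>' X" and bal: "\<Union>\<E>' = X \<times> X"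
    using assms(4) unfolding maximal_ballean_def unbounded_ballean_def ballean_def by auto
  have compE: "E O F \<in> \<E>'" if "E \<in> \<E>'" "F \<in> \<E>'" for E F using cs that by blast
  define bd where "bd = bounded_in X \<E>'"
  have img: "bd (E `` Y)" if hE: "E \<in> \<E>'" and hY: "bd Y" for E Y
  proof -
    obtain x F where x: "x \<in> X" "F \<in> \<E>'" "Y \<subseteq> F `` {x}" "Y \<subseteq> X"
      using hY unfolding bd_def bounded_in_def by blast
    have "E `` Y \<subseteq> (F O E) `` {x}" using x(3) by blast
    moreover have "E `` Y \<subseteq> X" using cs hE by blast
    ultimately show ?thesis unfolding bd_def bounded_in_def using x compE[OF x(2) hE] by blast
  qed
  have sub: "bd Z" if "bd Y" "Z \<subseteq> Y" for Y Z
    using that unfolding bd_def bounded_in_def by blast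
  have sing: "bd {x}" if "x \<in> X" for x
  proof -
    have "Id_on X \<in> \<E>'" using cs by blast
    then show ?thesis unfolding bd_def bounded_in_def using that by blast
  qed
  have un: "bd (Y \<union> Z)" if hY: "bd Y" and hZ: "bd Z" for Y Z
  proof -
    obtain x F where x: "x \<in> X" "F \<in> \<E>'" "Y \<subseteq> F `` {x}" "Y \<subseteq> X"
      using hY unfolding bd_def bounded_in_def by blast
    obtain y G where y: "y \<in> X" "G \<in> \<E>'" "Z \<subseteq> G `` {y}" "Z \<subseteq> X"
      using hZ unfolding bd_def bounded_in_def by blast
    obtain H where H: "H \<in> \<E>'" "(x,y) \<in> H" using bal x(1) y(1) by blast
    have "F \<union> H O G \<in> \<E>'" using cs compE[OF H(1) y(2)] x(2) by blast
    moreover have "Y \<union> Z \<subseteq> (F \<union> H O G) `` {x}" using x(3) y(3) H(2) by blast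
    ultimately show ?thesis unfolding bd_def bounded_in_def using x y by blast
  qed
  have bE: "bounded_in X \<E> Y \<longleftrightarrow> bd Y" for Y
  proof
    assume "bounded_in X \<E> Y" then show "bd Y"
      using assms(3) unfolding bd_def bounded_in_def by blast
  next
    assume b: "bd Y"
    show "bounded_in X \<E> Y"
    proof (rule ccontr)
      assume nb: "\<not> bounded_in X \<E> Y"
      have "Y \<subseteq> X" using b unfolding bd_def bounded_in_def by blast
      then obtain E where E: "E \<in> \<E>" "X = E `` Y"
        using assms(1) nb unfolding extremely_normal_def large_in_def by blast
      have "bd (E `` Y)" using img[OF _ b] E(1) assms(3) by blast
      then show False using E(2) unbE' unfolding bd_def by simp
    qed
  qed
  have eqB: "bounded_sets X \<E> = bounded_sets X \<E>'"
    unfolding bounded_sets_def using bE unfolding bd_def by blast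
  define G where "G = {E. E \<subseteq> X \<times> X \<and> E = E\<inverse> \<and> Id_on X \<subseteq> E \<and> (\<forall>B\<in>bounded_sets X \<E>. E `` B \<in> bounded_sets X \<E>)}"
  have G: "G = {E. E \<subseteq> X \<times> X \<and> E = E\<inverse> \<and> Id_on X \<subseteq> E \<and> (\<forall>B. bd B \<longrightarrow> bd (E `` B))}"
    unfolding G_def bounded_sets_def bE by simp
  define C where "C = {E. Id_on X \<subseteq> E \<and> E \<subseteq> X \<times> X \<and> (\<forall>B. bd B \<longrightarrow> bd (E `` B) \<and> bd (E\<inverse> `` B))}"
  have bdX: "bd B \<Longrightarrow> B \<subseteq> X" for B unfolding bd_def bounded_in_def by blast
  have Cmem: "E \<in> C \<longleftrightarrow> Id_on X \<subseteq> E \<and> E \<subseteq> X \<times> X \<and> (\<forall>B. bd B \<longrightarrow> bd (E `` B) \<and> bd (E\<inverse> `` B))" for E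
    unfolding C_def by simp
  have csC: "coarse_structure X C"
    unfolding coarse_structure_def
  proof (intro conjI)
    have "Id_on X `` B = B" if "bd B" for B using bdX[OF that] by blast
    moreover have "Id_on X \<subseteq> X \<times> X" by blast
    ultimately show "Id_on X \<in> C" unfolding Cmem by simp
    show "\<forall>E\<in>C. Id_on X \<subseteq> E \<and> E \<subseteq> X \<times> X" using Cmem by blast
    show "\<forall>E\<in>C. \<forall>E'. Id_on X \<subseteq> E' \<and> E' \<subseteq> E \<longrightarrow> E' \<in> C"
    proof (intro ballI allI impI)
      fix E E' assume E: "E \<in> C" and E': "Id_on X \<subseteq> E' \<and> E' \<subseteq> E"
      have EX: "E \<subseteq> X \<times> X" using E unfolding Cmem by blast
      show "E' \<in> C" unfolding Cmem
      proof (intro conjI allI impI)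
        show "Id_on X \<subseteq> E'" "E' \<subseteq> X \<times> X" using E' EX by blast+
      next
        fix B assume "bd B"
        then have "bd (E `` B)" "bd (E\<inverse> `` B)" using E unfolding Cmem by blast+
        moreover have "E' `` B \<subseteq> E `` B" "E'\<inverse> `` B \<subseteq> E\<inverse> `` B" using E' by blast+
        ultimately show "bd (E' `` B)" "bd (E'\<inverse> `` B)" using sub by blast+
      qed
    qed
    show "\<forall>E\<in>C. E\<inverse> \<in> C"
    proof
      fix E assume "E \<in> C"
      then show "E\<inverse> \<in> C" unfolding Cmem converse_converse by blast
    qed
    show "\<forall>E\<in>C. \<forall>F\<in>C. E \<union> F \<in> C"
    proof (intro ballI)
      fix E F assume E: "E \<in> C" and F: "F \<in> C"
      show "E \<union> F \<in> C" unfolding Cmem Un_Image converse_Un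
      proof (intro conjI allI impI)
        show "Id_on X \<subseteq> E \<union> F" "E \<union> F \<subseteq> X \<times> X" using E F unfolding Cmem by blast+
      next
        fix B assume "bd B"
        then have "bd (E `` B)" "bd (E\<inverse> `` B)" "bd (F `` B)" "bd (F\<inverse> `` B)"
          using E F unfolding Cmem by blast+
        then show "bd (E `` B \<union> F `` B)" "bd (E\<inverse> `` B \<union> F\<inverse> `` B)" using un by blast+
      qed
    qed
    show "\<forall>E\<in>C. \<forall>F\<in>C. E O F \<in> C"
    proof (intro ballI)
      fix E F assume E: "E \<in> C" and F: "F \<in> C"
      show "E O F \<in> C" unfolding Cmem relcomp_Image converse_relcomp
      proof (intro conjI allI impI)
        show "Id_on X \<subseteq> E O F" using E F unfolding Cmem by blast
        show "E O F \<subseteq> X \<times> X" using E F unfolding Cmem by blast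
      next
        fix B assume "bd B"
        then have "bd (E `` B)" "bd (F\<inverse> `` B)" using E F unfolding Cmem by blast+
        then show "bd (F `` (E `` B))" "bd (E\<inverse> `` (F\<inverse> `` B))" using E F unfolding Cmem by blast+
      qed
    qed
  qed
  have GC: "G \<subseteq> C" unfolding G C_def by auto
  have GX: "G \<subseteq> {E. Id_on X \<subseteq> E \<and> E \<subseteq> X \<times> X}" unfolding G by blast
  define U where "U = Uparrow X (bounded_sets X \<E>)"
  have U: "U = generated_coarse X G" unfolding U_def Uparrow_def G_def by simp
  have csU: "coarse_structure X U" unfolding U using gen_cs[OF GX] .
  have UC: "U \<subseteq> C" unfolding U using gen_least[OF csC GC] .
  have EU: "\<E>' \<subseteq> U"
  proof
    fix E assume E: "E \<in> \<E>'"
    define H where "H = E \<union> E\<inverse>"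
    have H: "H \<in> \<E>'" unfolding H_def using cs E by blast
    have "H \<in> G" unfolding G
    proof (intro CollectI conjI allI impI)
      show "H \<subseteq> X \<times> X" "Id_on X \<subseteq> H" using cs H by blast+
      show "H = H\<inverse>" unfolding H_def by auto
      show "bd (H `` B)" if "bd B" for B using img[OF H that] .
    qed
    then have "H \<in> U" using gen_sub U by blast
    moreover have "Id_on X \<subseteq> E \<and> E \<subseteq> H" using cs E unfolding H_def by blast
    ultimately show "E \<in> U" using csU unfolding coarse_structure_def by blast
  qed
  have "\<E>' = U"
  proof (rule ccontr)
    assume "\<E>' \<noteq> U"
    then have "\<E>' \<subset> U" using EU by blast
    then have "bounded_in X U X" using assms(4) csU unfolding maximal_ballean_def by blast
    then obtain x E where x: "x \<in> X" "E \<in> U" "X \<subseteq> E `` {x}" unfolding bounded_in_def by blast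
    have "bd (E `` {x})" using UC x(2) sing[OF x(1)] unfolding C_def by blast
    then have "bd X" using sub x(3) by blast
    then show False using unbE' unfolding bd_def by simp
  qed
  then show ?thesis using eqB unfolding U_def by blast
qed

end
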